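(* In the model described in the context, if $\tau \leq 3f$, then it is impossible to implement an a-audit operation satisfying both completeness and weak accuracy.
   Context: Model. An asynchronous system has an arbitrary number of client processes (writers, readers, auditors) and $n$ storage objects $o_1,\dots,o_n$. Each $o_k$ is a linearisable loggable read/write register holding a block from a domain $\mathbb{B}$ and a log $L_k$ (initially empty). Its operations are: rw-write($b$), which stores $b$ and returns an ack; rw-read(), which returns the currently stored block (or $\perp$ if none) and appends to $L_k$ the record $\langle p_r, \mathit{label}(b)\rangle$, where $p_r$ is the invoking reader and $\mathit{label}(b)$ identifies the value from which $b$ was derived; and rw-getLog(), which returns $L_k$. On top of these objects, a multi-writer multi-reader register over a value domain $\mathbb{V}$ is emulated by information dispersal. An a-write($v$) encodes $v$ into $n$ blocks $b_{v_1},\dots,b_{v_n}$ and sends $b_{v_k}$ to $o_k$. A reader can recover $v$ from any $\tau$ distinct blocks of $v$, and cannot recover it from fewer; $\tau>f$. Reads are fast (a single round-trip to the objects). Concurrency is unlimited, and writes may remain incomplete. Faults. Writers and auditors are honest and can only crash. Faulty readers may crash or contact only a subset of the objects. At most $f$ storage objects are faulty. A faulty object may crash, omit its block from readers, omit log records from auditors, and report records of reads that never occurred. Providing set $P_{p_r,v}$ in history $\sigma$: the set of objects $o_k$ such that $\sigma$ contains both an event in which $o_k$ receives a write request for $b_{v_k}$ and an event in which $o_k$ responds $b_{v_k}$ to a read request of $p_r$. The value $v$ is effectively read by $p_r$ iff $|P_{p_r,v}|\ge\tau$. Audit. An a-audit obtains logs via rw-getLog from an auditing quorum $A$ of $n-f$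 objects (availability). It returns a set $E_A$ of evidences. An evidence $\mathcal{E}_{p_r,v}$ is created from at least $t\ge1$ records $\langle p_r,\mathit{label}(v)\rangle$ from distinct objects. Completeness: for all readers $p_r$ and values $v$, $|P_{p_r,v}|\ge\tau$ before the audit implies $\mathcal{E}_{p_r,v}\in E_A$. Weak accuracy: for every correct reader $p_r$ that never invoked an a-read before the audit (so $P_{p_r,v}=\varnothing$ for all $v$), $\mathcal{E}_{p_r,v}\notin E_A$ for all $v$. *)

theory Defs
  imports Main
begin

text \<open>
  Abstract model of an execution prefix up to the moment of an a-audit.
  Storage objects are indexed by the naturals k < n (objects outside this range
  do not exist).
  A log record is a pair (reader, label of value).
\<close>

record ('p, 'v) scenario =
  faulty          :: "nat set"
  served          :: "nat \<Rightarrow> ('p \<times> 'v) set"   \<comment> \<open>(p,v) \<in> served k: o_k received the write of its block of v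
                                                   and responded that block to a read of p (before the audit)\<close>
  reported        :: "nat \<Rightarrow> ('p \<times> 'v) list"  \<comment> \<open>log returned by rw-getLog of o_k to the auditor\<close>
  invoked         :: "'p set"                  \<comment> \<open>readers that invoked an a-read before the audit\<close>
  correct_readers :: "'p set"
  quorum          :: "nat set"                 \<comment> \<open>auditing quorum A chosen by the asynchronous scheduler\<close>

definition admissible :: "nat \<Rightarrow> nat \<Rightarrow> ('p, 'v) scenario \<Rightarrow> bool" where
  "admissible n f sc \<longleftrightarrow>
     faulty sc \<subseteq> {..<n} \<and> card (faulty sc) \<le> f \<and>
     (\<forall>k. n \<le> k \<longrightarrow> served sc k = {} \<and> reported sc k = []) \<and>
     \<comment> \<open>correct objects log exactly the reads they serve\<close>
     (\<forall>k<n. k \<notin> faulty sc \<longrightarrow> set (reported sc k) = served sc k) \<and>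
     \<comment> \<open>only readers that invoked an a-read get served\<close>
     (\<forall>k p v. (p, v) \<in> served sc k \<longrightarrow> p \<in> invoked sc) \<and>
     quorum sc \<subseteq> {..<n} \<and> card (quorum sc) = n - f"

definition providing_set :: "('p, 'v) scenario \<Rightarrow> 'p \<Rightarrow> 'v \<Rightarrow> nat set" where
  "providing_set sc p v = {k. (p, v) \<in> served sc k}"

definition effectively_read :: "nat \<Rightarrow> ('p, 'v) scenario \<Rightarrow> 'p \<Rightarrow> 'v \<Rightarrow> bool" where
  "effectively_read tau sc p v \<longleftrightarrow> tau \<le> card (providing_set sc p v)"

text \<open>An audit algorithm maps the auditing quorum and the logs obtained from it
  (objects outside the quorum contribute nothing) to a set of evidences (p,v).\<close>
type_synonym ('p, 'v) audit_alg = "nat set \<Rightarrow> (nat \<Rightarrow> ('p \<times> 'v) list) \<Rightarrow> ('p \<times> 'v) set"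

definition audit_result :: "('p, 'v) audit_alg \<Rightarrow> ('p, 'v) scenario \<Rightarrow> ('p \<times> 'v) set" where
  "audit_result aud sc =
     aud (quorum sc) (\<lambda>k. if k \<in> quorum sc then reported sc k else [])"

definition evidence_based :: "nat \<Rightarrow> ('p, 'v) audit_alg \<Rightarrow> bool" where
  "evidence_based t aud \<longleftrightarrow> 1 \<le> t \<and>
     (\<forall>A L p v. (p, v) \<in> aud A L \<longrightarrow> t \<le> card {k \<in> A. (p, v) \<in> set (L k)})"

definition audit_complete :: "nat \<Rightarrow> nat \<Rightarrow> nat \<Rightarrow> ('p, 'v) audit_alg \<Rightarrow> bool" where
  "audit_complete n f tau aud \<longleftrightarrow>
     (\<forall>sc. admissible n f sc \<longrightarrow>
        (\<forall>p v. effectively_read tau sc p v \<longrightarrow> (p, v) \<in> audit_result aud sc))"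

definition audit_weakly_accurate :: "nat \<Rightarrow> nat \<Rightarrow> ('p, 'v) audit_alg \<Rightarrow> bool" where
  "audit_weakly_accurate n f aud \<longleftrightarrow>
     (\<forall>sc. admissible n f sc \<longrightarrow>
        (\<forall>p \<in> correct_readers sc. p \<notin> invoked sc \<longrightarrow>
           (\<forall>v. (p, v) \<notin> audit_result aud sc)))"

end

theory Submission
  imports Defs
begin

theorem theorem1:
  fixes n f tau :: nat
  assumes "f < tau" and "tau \<le> n" and "tau \<le> 3 * f"
  shows "\<not> (\<exists>(aud :: ('p, 'v) audit_alg) t.
             evidence_based t aud \<and> audit_complete n f tau aud \<and> audit_weakly_accurate n f aud)"
proof
  assume "\<exists>(aud :: ('p, 'v) audit_alg) t.
             evidence_based t aud \<and> audit_complete n f tau aud \<and> audit_weakly_accurate n f aud"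
  then obtain aud :: "('p, 'v) audit_alg" where
    C: "audit_complete n f tau aud" and W: "audit_weakly_accurate n f aud" by blast
  define p :: 'p where "p = undefined"
  define v :: 'v where "v = undefined"
  define Q where "Q = {..<n-f}"
  define S where "S = {n-tau..<n}"
  define F1 where "F1 = {n-tau..<n-tau+f}"
  define V where "V = {n-tau+f..<n-f}"
  define sc1 :: "('p,'v) scenario" where "sc1 = \<lparr> faulty = F1,
      served = (\<lambda>k. if k \<in> S then {(p,v)} else {}),
      reported = (\<lambda>k. if k \<in> S - F1 then [(p,v)] else []),
      invoked = UNIV, correct_readers = UNIV, quorum = Q \<rparr>"
  define sc2 :: "('p,'v) scenario" where "sc2 = \<lparr> faulty = V,
      served = (\<lambda>k. {}),
      reported = (\<lambda>k. if k \<in> V then [(p,v)] else []),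
      invoked = {}, correct_readers = {p}, quorum = Q \<rparr>"
  have cQ: "card Q = n - f" unfolding Q_def by simp
  have a1: "admissible n f sc1"
    unfolding admissible_def sc1_def using assms cQ
    by (auto simp: Q_def S_def F1_def)
  have a2: "admissible n f sc2"
    unfolding admissible_def sc2_def using assms cQ
    by (auto simp: Q_def V_def)
  have "effectively_read tau sc1 p v"
  proof -
    have "{k. (p, v) \<in> served sc1 k} = S" by (auto simp: sc1_def)
    then show ?thesis using assms by (simp add: S_def effectively_read_def providing_set_def)
  qed
  with C a1 have in1: "(p,v) \<in> audit_result aud sc1"
    unfolding audit_complete_def by blast
  from W a2 have in2: "(p,v) \<notin> audit_result aud sc2"
    unfolding audit_weakly_accurate_def by (simp add: sc2_def)
  have "(\<lambda>k. if k \<in> quorum sc1 then reported sc1 k else [])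
      = (\<lambda>k. if k \<in> quorum sc2 then reported sc2 k else [])"
    using assms by (auto simp: sc1_def sc2_def Q_def S_def F1_def V_def fun_eq_iff)
  moreover have "quorum sc1 = quorum sc2" by (simp add: sc1_def sc2_def)
  ultimately have "audit_result aud sc1 = audit_result aud sc2"
    unfolding audit_result_def by simp
  with in1 in2 show False by simp
qed

end
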